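(* Let $\mathbb{F}$ be a subfield of $\mathbb{R}$ and let $\vec v_1,\vec v_2,\vec v_3$ be an orthogonal basis of $\mathbb{F}^3$. Put $V_j:=\mathbb{F}\vec v_j\in\mathbb{P}^2(\mathbb{F})$, $V_{12}:=\mathbb{F}(\vec v_1-\vec v_2)$, $V_{23}:=\mathbb{F}(\vec v_2-\vec v_3)$, $V_{13}:=\mathbb{F}(\vec v_1-\vec v_3)$. Then $V_1\times V_2=V_3$, $V_2\times V_3=V_1$, $V_3\times V_1=V_2$, and for all $r,s\in\mathbb{F}$: \begin{enumerate} \item[a)] $\mathbb{F}(\vec v_1-rs\vec v_2)=V_3\times\big[\mathbb{F}(\vec v_3-r\vec v_2)\times\mathbb{F}(\vec v_1-s\vec v_3)\big]$; \item[b)] $\mathbb{F}(\vec v_1-s\vec v_3)=V_2\times\big[V_{23}\times\mathbb{F}(\vec v_1-s\vec v_2)\big]$; \item[c)] $\mathbb{F}(\vec v_3-r\vec v_2)=V_1\times\big[V_{13}\times\mathbb{F}(\vec v_1-r\vec v_2)\big]$; \item[d)] $\mathbb{F}(\vec v_1-(r-s)\vec v_2)=V_3\times\Big[\big([V_{23}\times\mathbb{F}(\vec v_1-r\vec v_2)]\times[V_2\times\mathbb{F}(\vec v_1-s\vec v_3)]\big)\times V_3\Big]$; \item[e)] $V_{13}=V_2\times(V_{12}\times V_{23})$; \item[f)] for $W\in\mathbb{P}^2(\mathbb{F})$, the expression $\imath(W):=(W\times V_3)\times\Big(\big((W\times V_3)\times V_3\big)\times V_2\Big)$ is defined precisely when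 $W=\mathbb{F}(\vec v_1-r\vec v_2+s\vec v_3)$ for some $s\in\mathbb{F}$ and a unique $r\in\mathbb{F}$, and in this case $\imath(W)=\mathbb{F}(\vec v_1-r\vec v_2)$. Moreover, if $W=\mathbb{F}(\vec v_1-r\vec v_2)$ then $\imath(W)=W$. \end{enumerate}
   Context: $\mathbb{P}^2(\mathbb{F})=\{\mathbb{F}\vec v:\vec 0\ne\vec v\in\mathbb{F}^3\}$ with $\mathbb{F}\vec v=\{\lambda\vec v:\lambda\in\mathbb{F}\}$. For distinct $\mathbb{F}\vec v,\mathbb{F}\vec w\in\mathbb{P}^2(\mathbb{F})$ the projective cross product is $\mathbb{F}\vec v\times\mathbb{F}\vec w:=\mathbb{F}(\vec v\times\vec w)$, where $\times$ is the usual cross product on $\mathbb{F}^3$; $\mathbb{F}\vec v\times\mathbb{F}\vec v$ is undefined, and an expression built from it is defined only if all its subexpressions are defined. All equalities in the claim are equalities of (defined) elements of $\mathbb{P}^2(\mathbb{F})$. *)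

theory Defs
  imports "HOL-Analysis.Analysis"
begin

definition is_subfield_of_real :: "real set \<Rightarrow> bool" where
  "is_subfield_of_real F \<longleftrightarrow> 0 \<in> F \<and> 1 \<in> F \<and>
     (\<forall>x\<in>F. \<forall>y\<in>F. x + y \<in> F \<and> x * y \<in> F) \<and>
     (\<forall>x\<in>F. - x \<in> F) \<and> (\<forall>x\<in>F. x \<noteq> 0 \<longrightarrow> inverse x \<in> F)"

definition Fvec :: "real set \<Rightarrow> (real^3) set" where
  "Fvec F = {v. \<forall>i. v $ i \<in> F}"

definition pline :: "real set \<Rightarrow> real^3 \<Rightarrow> (real^3) set" where
  "pline F v = {c *\<^sub>R v | c. c \<in> F}"

definition P2 :: "real set \<Rightarrow> (real^3) set set" where
  "P2 F = {pline F v | v. v \<in> Fvec F \<and> v \<noteq> 0}"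

definition orth_basis :: "real set \<Rightarrow> real^3 \<Rightarrow> real^3 \<Rightarrow> real^3 \<Rightarrow> bool" where
  "orth_basis F v1 v2 v3 \<longleftrightarrow> v1 \<in> Fvec F \<and> v2 \<in> Fvec F \<and> v3 \<in> Fvec F \<and>
     (\<forall>x\<in>Fvec F. \<exists>!abc. fst abc \<in> F \<and> fst (snd abc) \<in> F \<and> snd (snd abc) \<in> F \<and>
        x = fst abc *\<^sub>R v1 + fst (snd abc) *\<^sub>R v2 + snd (snd abc) *\<^sub>R v3) \<and>
     inner v1 v2 = 0 \<and> inner v2 v3 = 0 \<and> inner v1 v3 = 0"

text \<open>Projective cross product of two points; undefined (None) unless both are
  points of P^2(F) and distinct.  F v x F w := F (v x w) for representatives v, w.\<close>
definition proj_cross :: "real set \<Rightarrow> (real^3) set \<Rightarrow> (real^3) set \<Rightarrow> (real^3) set option" where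
  "proj_cross F A B =
     (if A \<in> P2 F \<and> B \<in> P2 F \<and> A \<noteq> B
      then Some (pline F (cross3 (SOME v. v \<in> Fvec F \<and> v \<noteq> 0 \<and> A = pline F v)
                                 (SOME w. w \<in> Fvec F \<and> w \<noteq> 0 \<and> B = pline F w)))
      else None)"

definition pc :: "real set \<Rightarrow> (real^3) set option \<Rightarrow> (real^3) set option \<Rightarrow> (real^3) set option" where
  "pc F X Y = (case (X, Y) of (Some A, Some B) \<Rightarrow> proj_cross F A B | _ \<Rightarrow> None)"

end

theory Submission
  imports Defs
begin

locale ob =
  fixes F :: "real set" and v1 v2 v3 :: "real^3"
  assumes hF: "is_subfield_of_real F" and hB: "orth_basis F v1 v2 v3"
begin

lemma F0: "0 \<in> F" and F1: "1 \<in> F" and Fadd: "x \<in> F \<Longrightarrow> y \<in> F \<Longrightarrow> x + y \<in> F"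
  and Fmul: "x \<in> F \<Longrightarrow> y \<in> F \<Longrightarrow> x * y \<in> F" and Fneg: "x \<in> F \<Longrightarrow> - x \<in> F"
  and Finv: "x \<in> F \<Longrightarrow> inverse x \<in> F"
  using hF unfolding is_subfield_of_real_def by (auto simp del: inverse_eq_divide)

lemma Fdiff: "x \<in> F \<Longrightarrow> y \<in> F \<Longrightarrow> x - y \<in> F"
  using Fadd[of x "-y"] Fneg[of y] by simp

lemma Fdiv: "x \<in> F \<Longrightarrow> y \<in> F \<Longrightarrow> x / y \<in> F"
  using Fmul[of x "inverse y"] Finv[of y] by (simp add: divide_inverse)

lemmas Fcl = F0 F1 Fadd Fmul Fneg Fdiff Fdiv

definition C :: "real \<Rightarrow> real \<Rightarrow> real \<Rightarrow> real^3" where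
  "C a b c = a *\<^sub>R v1 + b *\<^sub>R v2 + c *\<^sub>R v3"

lemma vF: "v1 \<in> Fvec F" "v2 \<in> Fvec F" "v3 \<in> Fvec F"
  using hB unfolding orth_basis_def by auto

lemma orth: "inner v1 v2 = 0" "inner v2 v3 = 0" "inner v1 v3 = 0"
  "inner v2 v1 = 0" "inner v3 v2 = 0" "inner v3 v1 = 0"
  using hB unfolding orth_basis_def by (auto simp: inner_commute)

lemma rep: "x \<in> Fvec F \<Longrightarrow> \<exists>a b c. a \<in> F \<and> b \<in> F \<and> c \<in> F \<and> x = C a b c"
  using hB unfolding orth_basis_def C_def by (metis (no_types, lifting) ex1E)

lemma zeroF: "(0::real^3) \<in> Fvec F" using F0 by (simp add: Fvec_def)

lemma uniq0: "a \<in> F \<Longrightarrow> b \<in> F \<Longrightarrow> c \<in> F \<Longrightarrow> C a b c = 0 \<Longrightarrow> a = 0 \<and> b = 0 \<and> c = 0"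
proof -
  assume a: "a \<in> F" "b \<in> F" "c \<in> F" "C a b c = 0"
  from hB zeroF obtain abc where u: "\<And>y. fst y \<in> F \<and> fst (snd y) \<in> F \<and> snd (snd y) \<in> F \<and>
        0 = fst y *\<^sub>R v1 + fst (snd y) *\<^sub>R v2 + snd (snd y) *\<^sub>R v3 \<Longrightarrow> y = abc"
    unfolding orth_basis_def by metis
  have "(a,b,c) = abc" using u[of "(a,b,c)"] a by (simp add: C_def)
  moreover have "(0,0,0) = abc" using u[of "(0,0,0)"] F0 by simp
  ultimately have "(a,b,c) = ((0::real),(0::real),(0::real))" by simp
  thus ?thesis by simp
qed

lemma vnz: "v1 \<noteq> 0" "v2 \<noteq> 0" "v3 \<noteq> 0"
  using uniq0[of 1 0 0] uniq0[of 0 1 0] uniq0[of 0 0 1] Fcl by (auto simp: C_def)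

lemma innerC: "inner (C a b c) v1 = a * inner v1 v1" "inner (C a b c) v2 = b * inner v2 v2"
  "inner (C a b c) v3 = c * inner v3 v3"
  by (simp_all add: C_def inner_add_left orth)

lemma Cinj: "C a b c = C a' b' c' \<longleftrightarrow> a = a' \<and> b = b' \<and> c = c'"
proof
  assume h: "C a b c = C a' b' c'"
  have "inner v1 v1 \<noteq> 0" "inner v2 v2 \<noteq> 0" "inner v3 v3 \<noteq> 0" using vnz by auto
  thus "a = a' \<and> b = b' \<and> c = c'" using innerC[of a b c] innerC[of a' b' c'] h by auto
qed simp

lemma C0: "C a b c = 0 \<longleftrightarrow> a = 0 \<and> b = 0 \<and> c = 0"
  using Cinj[of a b c 0 0 0] by (simp add: C_def)

lemma Cscale: "t *\<^sub>R C a b c = C (t*a) (t*b) (t*c)"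
  by (simp add: C_def scaleR_add_right)

lemma FvecC: "a \<in> F \<Longrightarrow> b \<in> F \<Longrightarrow> c \<in> F \<Longrightarrow> C a b c \<in> Fvec F"
  using vF unfolding Fvec_def C_def by (auto intro!: Fcl)

lemma Fvec_cross: "x \<in> Fvec F \<Longrightarrow> y \<in> Fvec F \<Longrightarrow> cross3 x y \<in> Fvec F"
  unfolding Fvec_def by (auto simp: cross3_def vector_def forall_3 intro!: Fcl)

lemma kex: assumes "x \<in> Fvec F" "y \<in> Fvec F" "x \<noteq> 0" "y \<noteq> 0" "inner x y = 0"
  and "inner (cross3 x y) u = 0" "inner (cross3 x y) w = 0" 
  and "cross3 x y = C a b c" "u = v1 \<or> u = v2 \<or> u = v3" "w = v1 \<or> w = v2 \<or> w = v3"
  shows True by simp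

lemma k1ex: "\<exists>k. k \<in> F \<and> k \<noteq> 0 \<and> cross3 v2 v3 = k *\<^sub>R v1"
proof -
  obtain a b c where abc: "a \<in> F" "b \<in> F" "c \<in> F" "cross3 v2 v3 = C a b c"
    using rep[OF Fvec_cross[OF vF(2,3)]] by blast
  have "b * inner v2 v2 = 0" using innerC(2)[of a b c] abc(4) dot_cross_self(1)[of v2 v3]
    by (simp add: inner_commute)
  hence b: "b = 0" using vnz by simp
  have "c * inner v3 v3 = 0" using innerC(3)[of a b c] abc(4) dot_cross_self(3)[of v2 v3]
    by (simp add: inner_commute)
  hence c: "c = 0" using vnz by simp
  have "cross3 v2 v3 \<noteq> 0" using norm_and_cross_eq_0[of v2 v3] vnz orth by auto
  thus ?thesis using abc b c by (auto simp: C_def)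
qed

lemma k2ex: "\<exists>k. k \<in> F \<and> k \<noteq> 0 \<and> cross3 v3 v1 = k *\<^sub>R v2"
proof -
  obtain a b c where abc: "a \<in> F" "b \<in> F" "c \<in> F" "cross3 v3 v1 = C a b c"
    using rep[OF Fvec_cross[OF vF(3,1)]] by blast
  have "a * inner v1 v1 = 0" using innerC(1)[of a b c] abc(4) dot_cross_self(3)[of v3 v1]
    by (simp add: inner_commute)
  hence b: "a = 0" using vnz by simp
  have "c * inner v3 v3 = 0" using innerC(3)[of a b c] abc(4) dot_cross_self(1)[of v3 v1]
    by (simp add: inner_commute)
  hence c: "c = 0" using vnz by simp
  have "cross3 v3 v1 \<noteq> 0" using norm_and_cross_eq_0[of v3 v1] vnz orth by auto
  thus ?thesis using abc b c by (auto simp: C_def)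
qed

lemma k3ex: "\<exists>k. k \<in> F \<and> k \<noteq> 0 \<and> cross3 v1 v2 = k *\<^sub>R v3"
proof -
  obtain a b c where abc: "a \<in> F" "b \<in> F" "c \<in> F" "cross3 v1 v2 = C a b c"
    using rep[OF Fvec_cross[OF vF(1,2)]] by blast
  have "a * inner v1 v1 = 0" using innerC(1)[of a b c] abc(4) dot_cross_self(1)[of v1 v2]
    by (simp add: inner_commute)
  hence b: "a = 0" using vnz by simp
  have "b * inner v2 v2 = 0" using innerC(2)[of a b c] abc(4) dot_cross_self(3)[of v1 v2]
    by (simp add: inner_commute)
  hence c: "b = 0" using vnz by simp
  have "cross3 v1 v2 \<noteq> 0" using norm_and_cross_eq_0[of v1 v2] vnz orth by auto
  thus ?thesis using abc b c by (auto simp: C_def)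
qed

definition "k1 = (SOME k. k \<in> F \<and> k \<noteq> 0 \<and> cross3 v2 v3 = k *\<^sub>R v1)"
definition "k2 = (SOME k. k \<in> F \<and> k \<noteq> 0 \<and> cross3 v3 v1 = k *\<^sub>R v2)"
definition "k3 = (SOME k. k \<in> F \<and> k \<noteq> 0 \<and> cross3 v1 v2 = k *\<^sub>R v3)"

lemma k1: "k1 \<in> F" "k1 \<noteq> 0" "cross3 v2 v3 = k1 *\<^sub>R v1"
  using someI_ex[OF k1ex] unfolding k1_def by auto
lemma k2: "k2 \<in> F" "k2 \<noteq> 0" "cross3 v3 v1 = k2 *\<^sub>R v2"
  using someI_ex[OF k2ex] unfolding k2_def by auto
lemma k3: "k3 \<in> F" "k3 \<noteq> 0" "cross3 v1 v2 = k3 *\<^sub>R v3"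
  using someI_ex[OF k3ex] unfolding k3_def by auto

lemma crossC: "cross3 (C a b c) (C a' b' c') = C ((b*c' - c*b')*k1) ((c*a' - a*c')*k2) ((a*b' - b*a')*k3)"
proof -
  have s: "cross3 v3 v2 = - (k1 *\<^sub>R v1)" "cross3 v1 v3 = - (k2 *\<^sub>R v2)" "cross3 v2 v1 = - (k3 *\<^sub>R v3)"
    using k1 k2 k3 cross_skew by metis+
  show ?thesis
    unfolding C_def
    apply (simp only: cross_add_left cross_add_right cross_mult_left cross_mult_right cross_refl
       k1(3) k2(3) k3(3) s scaleR_zero_right add_0_left add_0_right scaleR_scaleR scaleR_minus_right)
    apply (simp add: algebra_simps)
    done
qed

lemma pline_mem: "x \<in> pline F x" using F1 unfolding pline_def by force

lemma P2C: "a \<in> F \<Longrightarrow> b \<in> F \<Longrightarrow> c \<in> F \<Longrightarrow> \<not>(a = 0 \<and> b = 0 \<and> c = 0) \<Longrightarrow> pline F (C a b c) \<in> P2 F"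
  unfolding P2_def using FvecC C0 by blast

lemma pline_eqD: assumes "pline F x = pline F y" shows "\<exists>t. x = t *\<^sub>R y"
  using pline_mem[of x] assms unfolding pline_def by auto

lemma scal_in_F: assumes "x \<in> Fvec F" "y \<in> Fvec F" "y \<noteq> 0" "x = t *\<^sub>R y" shows "t \<in> F"
proof -
  obtain i where i: "y $ i \<noteq> 0" using assms(3) by (metis vec_eq_iff zero_index)
  have "t = x $ i / y $ i" using i assms(4) by simp
  thus ?thesis using assms(1,2) Fdiv unfolding Fvec_def by auto
qed

lemma pline_scale: assumes "t \<in> F" "t \<noteq> 0" shows "pline F (t *\<^sub>R y) = pline F y"
proof
  show "pline F (t *\<^sub>R y) \<subseteq> pline F y" unfolding pline_def using assms Fmul by force
  show "pline F y \<subseteq> pline F (t *\<^sub>R y)" unfolding pline_def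
  proof clarify
    fix c assume c: "c \<in> F"
    have "c *\<^sub>R y = (c / t) *\<^sub>R (t *\<^sub>R y)" using assms by simp
    thus "\<exists>ca. c *\<^sub>R y = ca *\<^sub>R t *\<^sub>R y \<and> ca \<in> F" using Fdiv[OF c assms(1)] by blast
  qed
qed

lemma PLC: assumes "a' \<in> F" "b' \<in> F" "c' \<in> F" "a \<in> F" "b \<in> F" "c \<in> F"
  "\<not>(a' = 0 \<and> b' = 0 \<and> c' = 0)" "t \<noteq> 0" "a = t*a'" "b = t*b'" "c = t*c'"
  shows "pline F (C a b c) = pline F (C a' b' c')"
proof -
  have e: "C a b c = t *\<^sub>R C a' b' c'" using assms by (simp add: Cscale)
  have "t \<in> F" using scal_in_F[OF FvecC FvecC _ e] assms C0 by auto
  thus ?thesis using e pline_scale assms by simp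
qed

lemma proj_crossC:
  assumes F: "a \<in> F" "b \<in> F" "c \<in> F" "a' \<in> F" "b' \<in> F" "c' \<in> F"
  and nz: "\<not> (b*c' - c*b' = 0 \<and> c*a' - a*c' = 0 \<and> a*b' - b*a' = 0)"
  shows "pc F (Some (pline F (C a b c))) (Some (pline F (C a' b' c'))) =
     Some (pline F (C ((b*c' - c*b')*k1) ((c*a' - a*c')*k2) ((a*b' - b*a')*k3)))"
proof -
  let ?A = "pline F (C a b c)" and ?B = "pline F (C a' b' c')"
  have nz1: "\<not>(a = 0 \<and> b = 0 \<and> c = 0)" and nz2: "\<not>(a' = 0 \<and> b' = 0 \<and> c' = 0)" using nz by auto
  have P: "?A \<in> P2 F" "?B \<in> P2 F" using P2C[OF F(1-3) nz1] P2C[OF F(4-6) nz2] by auto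
  have ne: "?A \<noteq> ?B"
  proof
    assume "?A = ?B"
    then obtain t where "C a b c = t *\<^sub>R C a' b' c'" using pline_eqD by blast
    hence "a = t*a'" "b = t*b'" "c = t*c'" by (simp_all add: Cscale Cinj)
    thus False using nz by (simp add: mult.commute mult.left_commute)
  qed
  have rep1: "\<And>A x. x \<in> Fvec F \<Longrightarrow> x \<noteq> 0 \<Longrightarrow> A = pline F x \<Longrightarrow>
     \<exists>t. t \<in> F \<and> t \<noteq> 0 \<and> (SOME v. v \<in> Fvec F \<and> v \<noteq> 0 \<and> A = pline F v) = t *\<^sub>R x"
  proof -
    fix A x assume x: "x \<in> Fvec F" "x \<noteq> 0" "A = pline F x"
    let ?v = "SOME v. v \<in> Fvec F \<and> v \<noteq> 0 \<and> A = pline F v"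
    have v: "?v \<in> Fvec F \<and> ?v \<noteq> 0 \<and> A = pline F ?v" using someI[of "\<lambda>v. v \<in> Fvec F \<and> v \<noteq> 0 \<and> A = pline F v" x] x by blast
    then obtain t where t: "?v = t *\<^sub>R x" using pline_eqD[of ?v x] x by blast
    have "t \<in> F" using scal_in_F[OF _ x(1) x(2) t] v by simp
    moreover have "t \<noteq> 0" using t v by (metis scale_zero_left)
    ultimately show "\<exists>t. t \<in> F \<and> t \<noteq> 0 \<and> ?v = t *\<^sub>R x" using t by blast
  qed
  obtain s where s: "s \<in> F" "s \<noteq> 0" "(SOME v. v \<in> Fvec F \<and> v \<noteq> 0 \<and> ?A = pline F v) = s *\<^sub>R C a b c"
    using rep1[OF FvecC[OF F(1-3)], of ?A] nz1 C0[of a b c] by blast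
  obtain t where t: "t \<in> F" "t \<noteq> 0" "(SOME v. v \<in> Fvec F \<and> v \<noteq> 0 \<and> ?B = pline F v) = t *\<^sub>R C a' b' c'"
    using rep1[OF FvecC[OF F(4-6)], of ?B] nz2 C0[of a' b' c'] by blast
  have "pc F (Some ?A) (Some ?B) = Some (pline F ((s*t) *\<^sub>R cross3 (C a b c) (C a' b' c')))"
    unfolding pc_def proj_cross_def using P ne s(3) t(3) by (simp add: cross_mult_left cross_mult_right mult.commute)
  also have "\<dots> = Some (pline F (cross3 (C a b c) (C a' b' c')))"
    using pline_scale[of "s*t"] s t Fmul by simp
  finally show ?thesis by (simp add: crossC)
qed

lemma pc_same: "pc F (Some A) (Some A) = None"
  by (simp add: pc_def proj_cross_def)
lemma pc_None: "pc F None X = None" "pc F X None = None"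
  by (simp_all add: pc_def split: option.splits)


lemma vC: "v1 = C 1 0 0" "v2 = C 0 1 0" "v3 = C 0 0 1"
  "v1 - r *\<^sub>R v2 = C 1 (-r) 0" "v3 - r *\<^sub>R v2 = C 0 (-r) 1" "v1 - r *\<^sub>R v3 = C 1 0 (-r)"
  "v2 - v3 = C 0 1 (-1)" "v1 - v2 = C 1 (-1) 0" "v1 - v3 = C 1 0 (-1)"
  "v1 - r *\<^sub>R v2 + s *\<^sub>R v3 = C 1 (-r) s"
  by (simp_all add: C_def algebra_simps)

lemmas kk = k1 k2 k3

lemma partA: "r \<in> F \<Longrightarrow> s \<in> F \<Longrightarrow> pc F (Some (pline F (C 0 0 1))) (pc F (Some (pline F (C 0 (-r) 1))) (Some (pline F (C 1 0 (-s))))) = Some (pline F (C 1 (- (r * s)) 0))"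
  apply (simp add: proj_crossC Fcl kk)
  apply (rule PLC[where t="- k1 * k2"])
  apply (auto intro!: Fcl simp: kk)
  done


lemma part0: "pc F (Some (pline F (C 1 0 0))) (Some (pline F (C 0 1 0))) = Some (pline F (C 0 0 1))"
  "pc F (Some (pline F (C 0 1 0))) (Some (pline F (C 0 0 1))) = Some (pline F (C 1 0 0))"
  "pc F (Some (pline F (C 0 0 1))) (Some (pline F (C 1 0 0))) = Some (pline F (C 0 1 0))"
    apply (simp add: proj_crossC Fcl kk)
    apply (rule PLC[where t="k3"]; auto intro!: Fcl simp: kk)
   apply (simp add: proj_crossC Fcl kk)
   apply (rule PLC[where t="k1"]; auto intro!: Fcl simp: kk)
  apply (simp add: proj_crossC Fcl kk)
  apply (rule PLC[where t="k2"]; auto intro!: Fcl simp: kk)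
  done

lemma partB: "s \<in> F \<Longrightarrow> pc F (Some (pline F (C 0 1 0))) (pc F (Some (pline F (C 0 1 (-1)))) (Some (pline F (C 1 (-s) 0)))) = Some (pline F (C 1 0 (-s)))"
  apply (simp add: proj_crossC Fcl kk)
  apply (rule PLC[where t="- k1 * k3"])
  apply (auto intro!: Fcl simp: kk)
  done

lemma partC: "r \<in> F \<Longrightarrow> pc F (Some (pline F (C 1 0 0))) (pc F (Some (pline F (C 1 0 (-1)))) (Some (pline F (C 1 (-r) 0)))) = Some (pline F (C 0 (-r) 1))"
  apply (simp add: proj_crossC Fcl kk)
  apply (rule PLC[where t="- k2 * k3"])
  apply (auto intro!: Fcl simp: kk)
  done

lemma partD: "r \<in> F \<Longrightarrow> s \<in> F \<Longrightarrow> pc F (Some (pline F (C 0 0 1)))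
          (pc F (pc F (pc F (Some (pline F (C 0 1 (-1)))) (Some (pline F (C 1 (-r) 0))))
                      (pc F (Some (pline F (C 0 1 0))) (Some (pline F (C 1 0 (-s))))))
                (Some (pline F (C 0 0 1)))) = Some (pline F (C 1 (- (r - s)) 0))"
  apply (simp add: proj_crossC Fcl kk)
  apply (rule PLC[where t="k1 * k2 * (k1 * k2 * k3)"])
  apply (auto intro!: Fcl simp: kk algebra_simps)
  done

lemma partE: "pc F (Some (pline F (C 0 1 0))) (pc F (Some (pline F (C 1 (-1) 0))) (Some (pline F (C 0 1 (-1))))) = Some (pline F (C 1 0 (-1)))"
  apply (simp add: proj_crossC Fcl kk)
  apply (rule PLC[where t="k1 * k3"])
  apply (auto intro!: Fcl simp: kk)
  done

abbreviation "iota W \<equiv> pc F (pc F (Some W) (Some (pline F (C 0 0 1))))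
                       (pc F (pc F (pc F (Some W) (Some (pline F (C 0 0 1)))) (Some (pline F (C 0 0 1)))) (Some (pline F (C 0 1 0))))"

lemma iotaS: "a \<in> F \<Longrightarrow> b \<in> F \<Longrightarrow> c \<in> F \<Longrightarrow> a \<noteq> 0 \<Longrightarrow> iota (pline F (C a b c)) = Some (pline F (C a b 0))"
  apply (simp add: proj_crossC Fcl kk)
  apply (rule PLC[where t="a * k1 * k1 * k2 * k2 * k3"])
  apply (auto intro!: Fcl simp: kk)
  done

lemma iotaN: assumes "b \<in> F" "c \<in> F" "\<not> (b = 0 \<and> c = 0)" shows "iota (pline F (C 0 b c)) = None"
proof (cases "b = 0")
  case True
  have "pline F (C 0 b c) = pline F (C 0 0 1)"
    by (rule PLC[where t=c]) (use assms True in \<open>auto intro!: Fcl\<close>)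
  thus ?thesis by (simp add: pc_same pc_None)
next
  case False
  have e: "pline F (C 0 (- (b * k1 * k2)) 0) = pline F (C 0 1 0)"
    by (rule PLC[where t="- (b * k1 * k2)"]) (use assms False in \<open>auto intro!: Fcl simp: kk\<close>)
  show ?thesis using assms False 
    by (simp add: proj_crossC Fcl kk e pc_same pc_None)
qed


lemma plC: "pline F v1 = pline F (C 1 0 0)" "pline F v2 = pline F (C 0 1 0)" "pline F v3 = pline F (C 0 0 1)"
  "pline F (v1 - r *\<^sub>R v2) = pline F (C 1 (-r) 0)" "pline F (v3 - r *\<^sub>R v2) = pline F (C 0 (-r) 1)"
  "pline F (v1 - r *\<^sub>R v3) = pline F (C 1 0 (-r))"
  "pline F (v2 - v3) = pline F (C 0 1 (-1))" "pline F (v1 - v2) = pline F (C 1 (-1) 0)"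
  "pline F (v1 - v3) = pline F (C 1 0 (-1))"
  "pline F (v1 - r *\<^sub>R v2 + s *\<^sub>R v3) = pline F (C 1 (-r) s)"
  by (simp_all add: C_def algebra_simps)

lemma partF: assumes W: "W \<in> P2 F"
  shows "let io = pc F (pc F (Some W) (Some (pline F v3)))
                       (pc F (pc F (pc F (Some W) (Some (pline F v3))) (Some (pline F v3))) (Some (pline F v2)))
       in (io \<noteq> None \<longleftrightarrow>
             (\<exists>!r. r \<in> F \<and> (\<exists>s\<in>F. W = pline F (v1 - r *\<^sub>R v2 + s *\<^sub>R v3)))) \<and>
          (\<forall>r\<in>F. \<forall>s\<in>F. W = pline F (v1 - r *\<^sub>R v2 + s *\<^sub>R v3) \<longrightarrow>
             io = Some (pline F (v1 - r *\<^sub>R v2))) \<and>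
          (\<forall>r\<in>F. W = pline F (v1 - r *\<^sub>R v2) \<longrightarrow> io = Some W)"
proof -
  obtain x where x: "x \<in> Fvec F" "x \<noteq> 0" "W = pline F x" using W unfolding P2_def by blast
  obtain a b c where abc: "a \<in> F" "b \<in> F" "c \<in> F" "x = C a b c" using rep[OF x(1)] by blast
  have nz: "\<not> (a = 0 \<and> b = 0 \<and> c = 0)" using x(2) abc(4) C0 by auto
  have c2: "\<forall>r\<in>F. \<forall>s\<in>F. W = pline F (v1 - r *\<^sub>R v2 + s *\<^sub>R v3) \<longrightarrow>
             iota W = Some (pline F (v1 - r *\<^sub>R v2))"
    using iotaS[of 1 _ _] Fcl by (auto simp: plC)
  have c3: "\<forall>r\<in>F. W = pline F (v1 - r *\<^sub>R v2) \<longrightarrow> iota W = Some W"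
    using iotaS[of 1 _ 0] Fcl by (auto simp: plC)
  have c1: "iota W \<noteq> None \<longleftrightarrow> (\<exists>!r. r \<in> F \<and> (\<exists>s\<in>F. W = pline F (v1 - r *\<^sub>R v2 + s *\<^sub>R v3)))"
  proof (cases "a = 0")
    case True
    have "iota W = None" using iotaN[of b c] abc nz True x(3) by simp
    moreover have "\<not> (W = pline F (v1 - r *\<^sub>R v2 + s *\<^sub>R v3))" for r s
    proof
      assume "W = pline F (v1 - r *\<^sub>R v2 + s *\<^sub>R v3)"
      hence "pline F (C 1 (-r) s) = pline F (C a b c)" using x(3) abc(4) by (simp add: plC)
      then obtain t where "C 1 (-r) s = t *\<^sub>R C a b c" using pline_eqD by blast
      thus False using True by (simp add: Cscale Cinj)
    qed
    ultimately show ?thesis by auto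
  next
    case False
    have "iota W = Some (pline F (C a b 0))" using iotaS abc False x(3) by simp
    moreover have "\<exists>!r. r \<in> F \<and> (\<exists>s\<in>F. W = pline F (v1 - r *\<^sub>R v2 + s *\<^sub>R v3))"
    proof (rule ex1I[where a="- (b / a)"])
      have "pline F (C a b c) = pline F (C 1 (- (- (b / a))) (c / a))"
        by (rule PLC[where t=a]) (use abc False in \<open>auto intro!: Fcl\<close>)
      hence "W = pline F (v1 - (- (b / a)) *\<^sub>R v2 + (c / a) *\<^sub>R v3)"
        using x(3) abc(4) by (simp only: plC(10))
      moreover have "- (b / a) \<in> F" "c / a \<in> F" using abc by (auto intro!: Fcl)
      ultimately show "- (b / a) \<in> F \<and> (\<exists>s\<in>F. W = pline F (v1 - (- (b / a)) *\<^sub>R v2 + s *\<^sub>R v3))"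
        by blast
    next
      fix r assume "r \<in> F \<and> (\<exists>s\<in>F. W = pline F (v1 - r *\<^sub>R v2 + s *\<^sub>R v3))"
      then obtain s where "W = pline F (v1 - r *\<^sub>R v2 + s *\<^sub>R v3)" by blast
      hence "pline F (C 1 (-r) s) = pline F (C a b c)" using x(3) abc(4) by (simp add: plC)
      then obtain t where "C 1 (-r) s = t *\<^sub>R C a b c" using pline_eqD by blast
      hence h: "1 = t * a" "- r = t * b" by (simp_all add: Cscale Cinj)
      have t: "t = 1 / a" using h(1) False by (simp add: field_simps)
      have "- r = b / a" using h(2) t by simp
      thus "r = - (b / a)" by linarith
    qed
    ultimately show ?thesis by auto
  qed
  show ?thesis unfolding Let_def plC(2,3) using c1 c2 c3 by (intro conjI)
qed

lemma main:
  "(pc F (Some (pline F v1)) (Some (pline F v2)) = Some (pline F v3))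
    \<and> (pc F (Some (pline F v2)) (Some (pline F v3)) = Some (pline F v1))
    \<and> (pc F (Some (pline F v3)) (Some (pline F v1)) = Some (pline F v2))
    \<and> (\<forall>r\<in>F. \<forall>s\<in>F.
      Some (pline F (v1 - (r * s) *\<^sub>R v2)) =
        pc F (Some (pline F v3)) (pc F (Some (pline F (v3 - r *\<^sub>R v2))) (Some (pline F (v1 - s *\<^sub>R v3)))))
    \<and> (\<forall>s\<in>F.
      Some (pline F (v1 - s *\<^sub>R v3)) =
        pc F (Some (pline F v2)) (pc F (Some (pline F (v2 - v3))) (Some (pline F (v1 - s *\<^sub>R v2)))))
    \<and> (\<forall>r\<in>F.
      Some (pline F (v3 - r *\<^sub>R v2)) =
        pc F (Some (pline F v1)) (pc F (Some (pline F (v1 - v3))) (Some (pline F (v1 - r *\<^sub>R v2)))))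
    \<and> (\<forall>r\<in>F. \<forall>s\<in>F.
      Some (pline F (v1 - (r - s) *\<^sub>R v2)) =
        pc F (Some (pline F v3))
          (pc F (pc F (pc F (Some (pline F (v2 - v3))) (Some (pline F (v1 - r *\<^sub>R v2))))
                      (pc F (Some (pline F v2)) (Some (pline F (v1 - s *\<^sub>R v3)))))
                (Some (pline F v3))))
    \<and> (Some (pline F (v1 - v3)) = pc F (Some (pline F v2)) (pc F (Some (pline F (v1 - v2))) (Some (pline F (v2 - v3)))))"
  unfolding plC
  apply (intro conjI ballI)
  apply (rule part0(1))
  apply (rule part0(2))
  apply (rule part0(3))
  apply (rule partA[symmetric]; assumption)
  apply (rule partB[symmetric]; assumption)
  apply (rule partC[symmetric]; assumption)
  apply (rule partD[symmetric]; assumption)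
  apply (rule partE[symmetric])
  done

end

theorem lemma8:
  fixes F :: "real set" and v1 v2 v3 :: "real^3"
  assumes hF: "is_subfield_of_real F"
    and hB: "orth_basis F v1 v2 v3"
  defines "V1 \<equiv> pline F v1" and "V2 \<equiv> pline F v2" and "V3 \<equiv> pline F v3"
    and "V12 \<equiv> pline F (v1 - v2)" and "V23 \<equiv> pline F (v2 - v3)"
    and "V13 \<equiv> pline F (v1 - v3)"
  shows "(pc F (Some V1) (Some V2) = Some V3)
    \<and> (pc F (Some V2) (Some V3) = Some V1)
    \<and> (pc F (Some V3) (Some V1) = Some V2)
    \<and> (\<forall>r\<in>F. \<forall>s\<in>F.
      Some (pline F (v1 - (r * s) *\<^sub>R v2)) =
        pc F (Some V3) (pc F (Some (pline F (v3 - r *\<^sub>R v2))) (Some (pline F (v1 - s *\<^sub>R v3)))))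
    \<and> (\<forall>s\<in>F.
      Some (pline F (v1 - s *\<^sub>R v3)) =
        pc F (Some V2) (pc F (Some V23) (Some (pline F (v1 - s *\<^sub>R v2)))))
    \<and> (\<forall>r\<in>F.
      Some (pline F (v3 - r *\<^sub>R v2)) =
        pc F (Some V1) (pc F (Some V13) (Some (pline F (v1 - r *\<^sub>R v2)))))
    \<and> (\<forall>r\<in>F. \<forall>s\<in>F.
      Some (pline F (v1 - (r - s) *\<^sub>R v2)) =
        pc F (Some V3)
          (pc F (pc F (pc F (Some V23) (Some (pline F (v1 - r *\<^sub>R v2))))
                      (pc F (Some V2) (Some (pline F (v1 - s *\<^sub>R v3)))))
                (Some V3)))
    \<and> (Some V13 = pc F (Some V2) (pc F (Some V12) (Some V23)))
    \<and> (\<forall>W\<in>P2 F.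
      (let iota = pc F (pc F (Some W) (Some V3))
                       (pc F (pc F (pc F (Some W) (Some V3)) (Some V3)) (Some V2))
       in (iota \<noteq> None \<longleftrightarrow>
             (\<exists>!r. r \<in> F \<and> (\<exists>s\<in>F. W = pline F (v1 - r *\<^sub>R v2 + s *\<^sub>R v3)))) \<and>
          (\<forall>r\<in>F. \<forall>s\<in>F. W = pline F (v1 - r *\<^sub>R v2 + s *\<^sub>R v3) \<longrightarrow>
             iota = Some (pline F (v1 - r *\<^sub>R v2))) \<and>
          (\<forall>r\<in>F. W = pline F (v1 - r *\<^sub>R v2) \<longrightarrow> iota = Some W)))"
proof -
  interpret ob F v1 v2 v3 using hF hB by unfold_locales
  show ?thesis unfolding V1_def V2_def V3_def V12_def V23_def V13_def
    apply (insert main, elim conjE)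
    apply (intro conjI)
    apply assumption+
    apply (rule ballI, rule partF, assumption)
    done
qed

end
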